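(* Let $g\colon\mathbb{S}^1\to\mathbb{S}^1$ be an orientation-preserving $L$-bi-Lipschitz homeomorphism (with respect to $\sigma$), and let $\psi\colon Z_2\to Z_2$ be the map obtained from its radial extension as in the context. Then $\psi$ is $L$-bi-Lipschitz with respect to $\sigma$.
   Context: Let $\mathbb{S}^2\subset\mathbb{R}^3$ be the unit sphere with great-circle distance $\sigma$, $\mathbb{S}^1$ the equator, $Z_2$ the open northern hemisphere ($(0,0,1)\in Z_2$). Let $P(x_1,x_2,x_3)=(x_1,x_2)/(1+x_3)$ be the stereographic projection from the south pole $(0,0,-1)$ onto $\mathbb{R}^2$; it fixes $\mathbb{S}^1$ (identified with the unit circle) and maps $Z_2$ onto the open unit disk. Set $\widetilde g=P\circ g\circ P^{-1}$ on the unit circle, and let $\widetilde G\colon\mathbb{R}\to\mathbb{R}$ be a homeomorphism with $\widetilde g(e^{i\theta})=e^{i\widetilde G(\theta)}$. The radial extension is $\widetilde\psi(re^{i\theta})=re^{i\widetilde G(\theta)}$ for $0\le r\le1$, and $\psi=P^{-1}\circ\widetilde\psi\circ P|_{Z_2}$. *)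

theory Defs
  imports "HOL-Analysis.Analysis"
begin

definition S2 :: "(real^3) set" where
  "S2 = {x. norm x = 1}"

definition sigma :: "real^3 \<Rightarrow> real^3 \<Rightarrow> real" where
  "sigma x y = arccos (x \<bullet> y)"

definition S1 :: "(real^3) set" where
  "S1 = {x \<in> S2. x$3 = 0}"

definition Z2 :: "(real^3) set" where
  "Z2 = {x \<in> S2. x$3 > 0}"

text \<open>Stereographic projection from the south pole and its inverse.\<close>
definition P :: "real^3 \<Rightarrow> complex" where
  "P x = Complex (x$1 / (1 + x$3)) (x$2 / (1 + x$3))"

definition Pinv :: "complex \<Rightarrow> real^3" where
  "Pinv z = vector [2 * Re z / (1 + (cmod z)\<^sup>2), 2 * Im z / (1 + (cmod z)\<^sup>2),
                    (1 - (cmod z)\<^sup>2) / (1 + (cmod z)\<^sup>2)]"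

definition bilip_sigma :: "real \<Rightarrow> (real^3 \<Rightarrow> real^3) \<Rightarrow> (real^3) set \<Rightarrow> bool" where
  "bilip_sigma L f A \<longleftrightarrow>
     (\<forall>x\<in>A. \<forall>y\<in>A. sigma x y \<le> L * sigma (f x) (f y) \<and> sigma (f x) (f y) \<le> L * sigma x y)"

definition gt :: "(real^3 \<Rightarrow> real^3) \<Rightarrow> complex \<Rightarrow> complex" where
  "gt g = P \<circ> g \<circ> Pinv"

definition orientation_preserving :: "(real^3 \<Rightarrow> real^3) \<Rightarrow> bool" where
  "orientation_preserving g \<longleftrightarrow>
     (\<exists>G::real \<Rightarrow> real. continuous_on UNIV G \<and> strict_mono G \<and>
        (\<forall>\<theta>. gt g (cis \<theta>) = cis (G \<theta>)))"

definition psit :: "(real \<Rightarrow> real) \<Rightarrow> complex \<Rightarrow> complex" where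
  "psit G z = complex_of_real (cmod z) * cis (G (Arg z))"

definition psi :: "(real \<Rightarrow> real) \<Rightarrow> real^3 \<Rightarrow> real^3" where
  "psi G x = Pinv (psit G (P x))"

end

theory Submission
  imports Defs
begin


lemma m_mono:
  fixes x y :: real
  assumes "0 < x" "x \<le> y" "y < pi"
  shows "y * cos y / sin y \<le> x * cos x / sin x"
proof -
  have "(\<lambda>z. z * cos z / sin z) x \<ge> (\<lambda>z. z * cos z / sin z) y"
  proof (rule DERIV_nonpos_imp_nonincreasing[OF assms(2)])
    fix z assume z: "x \<le> z" "z \<le> y"
    have sz: "sin z > 0" using z assms by (intro sin_gt_zero) auto
    have e: "z * (cos z * cos z) + z * (sin z * sin z) = z"
      using sin_cos_squared_add[of z] by (simp add: power2_eq_square algebra_simps flip: distrib_left)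
    have "((\<lambda>z. z * cos z / sin z) has_real_derivative (sin z * cos z - z) / (sin z * sin z)) (at z)"
      using sz by (auto intro!: derivative_eq_intros simp: field_simps e)
    moreover have "(sin z * cos z - z) / (sin z * sin z) \<le> 0"
    proof -
      have "sin z * cos z \<le> z"
        using sin_x_le_x[of "2*z"] z assms by (simp add: sin_double)
      then show ?thesis using sz by (intro divide_nonpos_nonneg) auto
    qed
    ultimately show "\<exists>d. ((\<lambda>z. z * cos z / sin z) has_real_derivative d) (at z) \<and> d \<le> 0" by blast
  qed
  then show ?thesis by simp
qed

lemma k_mono:
  fixes x y :: real
  assumes "0 < x" "x \<le> y" "y < pi"
  shows "y * (1 + cos y) / sin y \<le> x * (1 + cos x) / sin x"
proof -
  have "(\<lambda>z. z * (1 + cos z) / sin z) x \<ge> (\<lambda>z. z * (1 + cos z) / sin z) y"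
  proof (rule DERIV_nonpos_imp_nonincreasing[OF assms(2)])
    fix z assume z: "x \<le> z" "z \<le> y"
    have sz: "sin z > 0" using z assms by (intro sin_gt_zero) auto
    have e: "z * (cos z * cos z) + z * (sin z * sin z) = z"
      using sin_cos_squared_add[of z] by (simp add: power2_eq_square algebra_simps flip: distrib_left)
    have "((\<lambda>z. z * (1 + cos z) / sin z) has_real_derivative
       (((1 + cos z) - z * sin z) * sin z - z * (1 + cos z) * cos z) / (sin z * sin z)) (at z)"
      using sz by (auto intro!: derivative_eq_intros)
    moreover have "((1 + cos z) - z * sin z) * sin z - z * (1 + cos z) * cos z
        = (1 + cos z) * (sin z - z)"
      using e by (simp add: algebra_simps)
    moreover have "(1 + cos z) * (sin z - z) / (sin z * sin z) \<le> 0"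
    proof -
      have h1: "sin z - z \<le> 0" using sin_x_le_x[of z] z assms by simp
      have h2: "1 + cos z \<ge> 0" using cos_ge_minus_one[of z] by linarith
      show ?thesis
        by (intro divide_nonpos_nonneg mult_nonneg_nonpos h1 h2) simp
    qed
    ultimately show "\<exists>d. ((\<lambda>z. z * (1 + cos z) / sin z) has_real_derivative d) (at z) \<and> d \<le> 0"
      by auto
  qed
  then show ?thesis by simp
qed

locale sph =
  fixes c B :: real
  assumes c0: "c \<ge> 0" and B0: "B > 0" and cB: "c + B \<le> 1"
begin

definition F :: "real \<Rightarrow> real" where "F t = arccos (c + B * cos t)"

lemma u_bounds: "-1 \<le> c + B * cos t" "c + B * cos t \<le> 1"
proof -
  have a: "B * cos t \<ge> - B"
    using mult_left_mono[OF cos_ge_minus_one[of t], of B] B0 by simp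
  have b: "B * cos t \<le> B"
    using mult_left_mono[OF cos_le_one[of t], of B] B0 by simp
  show "-1 \<le> c + B * cos t" "c + B * cos t \<le> 1" using a b c0 cB B0 by linarith+
qed

lemma u_strict: assumes "0 < t" "t < pi" shows "-1 < c + B * cos t" "c + B * cos t < 1"
proof -
  have "cos t < 1" "cos t > -1"
    using assms cos_monotone_0_pi[of 0 t] cos_monotone_0_pi[of t pi] by auto
  then have a: "B * cos t > - B"
    using mult_strict_left_mono[of "-1" "cos t" B] B0 by simp
  have b: "B * cos t < B"
    using mult_strict_left_mono[of "cos t" 1 B] B0 \<open>cos t < 1\<close> by simp
  show "-1 < c + B * cos t" "c + B * cos t < 1" using a b c0 cB B0 by linarith+
qed

lemma cosF: "cos (F t) = c + B * cos t"
  unfolding F_def using u_bounds by (simp add: cos_arccos)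

lemma F_range: "0 \<le> F t" "F t \<le> pi"
  unfolding F_def using u_bounds by (auto intro: arccos_lbound arccos_ubound)

lemma sinF: assumes "0 < t" "t < pi" shows "sin (F t) > 0" "0 < F t" "F t < pi"
proof -
  have "sin (F t) = sqrt (1 - (c + B * cos t)\<^sup>2)"
    unfolding F_def using u_bounds by (simp add: sin_arccos)
  moreover have "(c + B * cos t)\<^sup>2 < 1"
    using u_strict[OF assms] by (simp add: abs_square_less_1)
  ultimately show "sin (F t) > 0" by simp
  then show "0 < F t" "F t < pi" using F_range[of t] by (auto intro: ccontr)
qed

lemma DF: assumes "0 < t" "t < pi"
  shows "(F has_real_derivative (B * sin t / sin (F t))) (at t)"
proof -
  have s: "sin (F t) = sqrt (1 - (c + B * cos t)\<^sup>2)"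
    unfolding F_def using u_bounds by (simp add: sin_arccos)
  have d1: "((\<lambda>t. c + B * cos t) has_real_derivative (B * - sin t)) (at t)"
    by (auto intro!: derivative_eq_intros)
  have "((\<lambda>t. arccos (c + B * cos t)) has_real_derivative
          inverse (- sqrt (1 - (c + B * cos t)\<^sup>2)) * (B * - sin t)) (at t)"
    by (rule DERIV_chain2[OF DERIV_arccos[OF u_strict[OF assms]] d1])
  moreover have "inverse (- sqrt (1 - (c + B * cos t)\<^sup>2)) * (B * - sin t) = B * sin t / sin (F t)"
    using s by (simp add: field_simps)
  ultimately show ?thesis unfolding F_def[abs_def] by simp
qed

lemma contF: "continuous_on UNIV F"
  unfolding F_def[abs_def] using u_bounds by (intro continuous_intros) auto

lemma Fmono: assumes "0 \<le> t" "t \<le> t'" "t' \<le> pi" shows "F t \<le> F t'"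
proof -
  have "cos t' \<le> cos t" using cos_monotone_0_pi_le assms by auto
  then have "c + B * cos t' \<le> c + B * cos t" using B0 by simp
  then show ?thesis unfolding F_def using u_bounds by (intro arccos_le_arccos) auto
qed

lemma case1: assumes "0 < t" "t \<le> pi" "F t \<le> t"
  shows "B * t * sin t \<le> F t * sin (F t)"
proof (cases "t = pi")
  case True
  then show ?thesis using F_range[of t] by (simp add: sin_ge_zero)
next
  case False
  then have tp: "t < pi" using assms by simp
  have Fp: "0 < F t" "F t < pi" "sin (F t) > 0" using sinF[OF assms(1) tp] by auto
  have st: "sin t > 0" using assms tp by (intro sin_gt_zero) auto
  define k where "k z = z * (1 + cos z) / sin z" for z :: real
  have kk: "k t \<le> k (F t)" unfolding k_def using k_mono[OF Fp(1) assms(3) tp] .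
  have co: "0 \<le> 1 + cos t" using cos_ge_minus_one[of t] by linarith
  have k0: "k t \<ge> 0" unfolding k_def using assms st co
    by (intro divide_nonneg_pos mult_nonneg_nonneg) auto
  have ksq: "k z * (1 - cos z) = z * sin z" if "sin z \<noteq> 0" for z
  proof -
    have "k z * (1 - cos z) = z * ((1 + cos z) * (1 - cos z)) / sin z"
      unfolding k_def by (simp add: field_simps)
    also have "(1 + cos z) * (1 - cos z) = sin z * sin z"
      using sin_cos_squared_add[of z] by (simp add: power2_eq_square algebra_simps)
    finally show ?thesis using that by simp
  qed
  have c1: "B * (1 - cos t) \<le> 1 - cos (F t)" using cosF[of t] cB by (simp add: algebra_simps)
  have c2: "0 \<le> 1 - cos (F t)" using cos_le_one[of "F t"] by simp
  have "B * t * sin t = k t * (B * (1 - cos t))" using ksq[of t] st by simp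
  also have "\<dots> \<le> k t * (1 - cos (F t))" using c1 k0 by (rule mult_left_mono)
  also have "\<dots> \<le> k (F t) * (1 - cos (F t))" using kk c2 by (rule mult_right_mono)
  also have "\<dots> = F t * sin (F t)" using ksq[of "F t"] Fp by simp
  finally show ?thesis .
qed

lemma Gnonneg: assumes "0 < t" "t < pi"
  shows "B * t * sin t \<le> F t * sin (F t)"
proof -
  define S where "S = {t..pi} \<inter> {s. F s \<le> s}"
  have cl: "closed S" unfolding S_def
    by (intro closed_Int closed_atLeastAtMost closed_Collect_le contF continuous_on_id)
  have piS: "pi \<in> S" unfolding S_def using assms F_range[of pi] by auto
  have bdd: "bdd_below S" unfolding S_def by (rule bdd_belowI[of _ t]) auto
  define T where "T = Inf S"
  have TS: "T \<in> S" unfolding T_def using closed_contains_Inf[OF _ bdd cl] piS by auto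
  have tT: "t \<le> T" "T \<le> pi" "F T \<le> T" using TS unfolding S_def by auto
  have below: "F s > s" if "t \<le> s" "s < T" for s
  proof (rule ccontr)
    assume "\<not> F s > s"
    then have "s \<in> S" unfolding S_def using that tT by auto
    then have "T \<le> s" unfolding T_def using bdd by (rule cInf_lower)
    then show False using that by simp
  qed
  define G where "G s = F s * sin (F s) - B * s * sin s" for s
  have "G T \<le> G t"
  proof (rule DERIV_nonpos_imp_decreasing_open[OF tT(1)])
    show "continuous_on {t..T} G" unfolding G_def[abs_def]
      by (intro continuous_intros continuous_on_subset[OF contF]) auto
  next
    fix s assume s: "t < s" "s < T"
    have s0: "0 < s" "s < pi" using s assms tT by auto
    have Fs: "s < F s" using below[of s] s by auto
    have sp: "sin (F s) > 0" "F s < pi" using sinF[OF s0] by auto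
    have ss: "sin s > 0" using s0 by (intro sin_gt_zero) auto
    have d: "(G has_real_derivative
        (B * sin s / sin (F s) * sin (F s) + F s * (cos (F s) * (B * sin s / sin (F s)))
          - B * (sin s + s * cos s))) (at s)"
      unfolding G_def[abs_def]
      by (auto intro!: derivative_eq_intros DF[OF s0] simp: algebra_simps)
    have eq: "B * sin s / sin (F s) * sin (F s) + F s * (cos (F s) * (B * sin s / sin (F s)))
          - B * (sin s + s * cos s)
        = B * sin s * (F s * cos (F s) / sin (F s) - s * cos s / sin s)"
      using sp ss by (simp add: field_simps)
    have "F s * cos (F s) / sin (F s) \<le> s * cos s / sin s"
      using m_mono[OF s0(1) _ sp(2)] Fs by simp
    then have "B * sin s * (F s * cos (F s) / sin (F s) - s * cos s / sin s) \<le> 0"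
      using B0 ss by (intro mult_nonneg_nonpos) auto
    then show "\<exists>y. (G has_real_derivative y) (at s) \<and> y \<le> 0"
      using d eq by auto
  qed
  moreover have "G T \<ge> 0" unfolding G_def using case1[of T] tT assms by simp
  ultimately show ?thesis unfolding G_def by simp
qed

lemma ratio: assumes "0 < t" "t \<le> t'" "t' \<le> pi"
  shows "F t' / t' \<le> F t / t"
proof (rule DERIV_nonpos_imp_decreasing_open[OF assms(2)])
  show "continuous_on {t..t'} (\<lambda>s. F s / s)"
    using assms by (intro continuous_intros continuous_on_subset[OF contF]) auto
next
  fix s assume s: "t < s" "s < t'"
  have s0: "0 < s" "s < pi" using s assms by auto
  have sp: "sin (F s) > 0" using sinF[OF s0] by auto
  have d: "((\<lambda>s. F s / s) has_real_derivative
      ((B * sin s / sin (F s)) * s - F s * 1) / (s * s)) (at s)"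
    using s0 by (auto intro!: derivative_eq_intros DF[OF s0])
  have "B * sin s / sin (F s) * s \<le> F s"
    using Gnonneg[OF s0] sp by (simp add: pos_divide_le_eq algebra_simps)
  then have "((B * sin s / sin (F s)) * s - F s * 1) / (s * s) \<le> 0"
    by (intro divide_nonpos_nonneg) auto
  then show "\<exists>y. ((\<lambda>s. F s / s) has_real_derivative y) (at s) \<and> y \<le> 0"
    using d by blast
qed

lemma main1D: assumes "1 \<le> L" "0 \<le> t" "t \<le> pi" "0 \<le> t'" "t' \<le> pi" "t' \<le> L * t"
  shows "F t' \<le> L * F t"
proof (cases "t = 0")
  case True
  then have "t' = 0" using assms by simp
  then show ?thesis using True F_range[of 0] assms(1) by (simp add: mult_le_cancel_right1)
next
  case False
  then have t0: "0 < t" using assms by simp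
  show ?thesis
  proof (cases "t' \<le> t")
    case True
    then have "F t' \<le> F t" using Fmono assms by auto
    also have "\<dots> \<le> L * F t" using F_range[of t] assms(1) by (simp add: mult_le_cancel_right1)
    finally show ?thesis .
  next
    case False
    then have "F t' / t' \<le> F t / t" using ratio[of t t'] t0 assms by auto
    then have "F t' \<le> t' * (F t / t)" using False t0 by (simp add: pos_divide_le_eq mult.commute)
    also have "\<dots> \<le> (L * t) * (F t / t)" using assms F_range[of t] t0
      by (intro mult_right_mono) auto
    also have "\<dots> = L * F t" using t0 by simp
    finally show ?thesis .
  qed
qed

end



lemma inner3: "(u::real^3) \<bullet> v = u$1 * v$1 + u$2 * v$2 + u$3 * v$3"
  by (simp add: inner_vec_def sum_3)

lemma norm3: "(norm (u::real^3))\<^sup>2 = (u$1)\<^sup>2 + (u$2)\<^sup>2 + (u$3)\<^sup>2"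
  unfolding power2_norm_eq_inner by (simp add: inner3 power2_eq_square)

lemma inner_Pinv:
  assumes "0 \<le> r1" "0 \<le> r2"
  shows "Pinv (complex_of_real r1 * cis a1) \<bullet> Pinv (complex_of_real r2 * cis a2)
    = ((1 - r1\<^sup>2) * (1 - r2\<^sup>2) + 4 * r1 * r2 * cos (a1 - a2)) / ((1 + r1\<^sup>2) * (1 + r2\<^sup>2))"
proof -
  have n1: "cmod (complex_of_real r1 * cis a1) = r1" using assms by (simp add: norm_mult)
  have n2: "cmod (complex_of_real r2 * cis a2) = r2" using assms by (simp add: norm_mult)
  have p1: "1 + r1\<^sup>2 > 0" "1 + r2\<^sup>2 > 0" by (auto intro: add_pos_nonneg)
  have p3: "1 + (r1\<^sup>2 + (r2\<^sup>2 + r1\<^sup>2 * r2\<^sup>2)) > 0" by (auto intro!: add_pos_nonneg)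
  show ?thesis
    unfolding Pinv_def inner3 n1 n2 vector_3 rcis_def[symmetric] Re_rcis Im_rcis
    by (simp only: times_divide_times_eq add_divide_distrib[symmetric] cos_diff)
       (simp add: algebra_simps)
qed

lemma PinvP:
  assumes "x \<in> S2" "x$3 \<noteq> -1"
  shows "Pinv (P x) = x"
proof -
  have n: "(x$1)\<^sup>2 + (x$2)\<^sup>2 + (x$3)\<^sup>2 = 1" using assms(1) norm3[of x] by (simp add: S2_def)
  have d: "1 + x$3 \<noteq> 0" using assms(2) by (metis add.commute add_eq_0_iff)
  have cm: "(cmod (P x))\<^sup>2 = ((x$1)\<^sup>2 + (x$2)\<^sup>2) / (1 + x$3)\<^sup>2"
    unfolding P_def cmod_power2 by (simp add: power_divide add_divide_distrib)
  also have "(x$1)\<^sup>2 + (x$2)\<^sup>2 = (1 - x$3) * (1 + x$3)"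
    using n by (simp add: algebra_simps power2_eq_square)
  also have "(1 - x$3) * (1 + x$3) / (1 + x$3)\<^sup>2 = (1 - x$3) / (1 + x$3)"
    using d by (simp add: power2_eq_square)
  finally have cm2: "(cmod (P x))\<^sup>2 = (1 - x$3) / (1 + x$3)" .
  note cm2
  have den: "1 + (cmod (P x))\<^sup>2 = 2 / (1 + x$3)"
    unfolding cm2 using d by (simp add: field_simps)
  show ?thesis
    unfolding vec_eq_iff forall_3 Pinv_def vector_3 den cm2
    using d by (auto simp: P_def field_simps)
qed


lemma cmodP2:
  assumes "x \<in> S2" "x$3 \<noteq> -1"
  shows "(cmod (P x))\<^sup>2 = (1 - x$3) / (1 + x$3)"
proof -
  have n: "(x$1)\<^sup>2 + (x$2)\<^sup>2 + (x$3)\<^sup>2 = 1" using assms(1) norm3[of x] by (simp add: S2_def)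
  have d: "1 + x$3 \<noteq> 0" using assms(2) by (metis add.commute add_eq_0_iff)
  have cm: "(cmod (P x))\<^sup>2 = ((x$1)\<^sup>2 + (x$2)\<^sup>2) / (1 + x$3)\<^sup>2"
    unfolding P_def cmod_power2 by (simp add: power_divide add_divide_distrib)
  also have "(x$1)\<^sup>2 + (x$2)\<^sup>2 = (1 - x$3) * (1 + x$3)"
    using n by (simp add: algebra_simps power2_eq_square)
  also have "(1 - x$3) * (1 + x$3) / (1 + x$3)\<^sup>2 = (1 - x$3) / (1 + x$3)"
    using d by (simp add: power2_eq_square)
  finally show ?thesis .
qed

lemma Z2_facts:
  assumes "x \<in> Z2"
  shows "cmod (P x) < 1" "x = Pinv (complex_of_real (cmod (P x)) * cis (Arg (P x)))"
proof -
  have xs: "x \<in> S2" "x$3 > 0" using assms by (auto simp: Z2_def)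
  then have ne: "x$3 \<noteq> -1" by auto
  have "(cmod (P x))\<^sup>2 < 1" using cmodP2[OF xs(1) ne] xs by (simp add: divide_less_eq)
  then show "cmod (P x) < 1" by (simp add: abs_square_less_1)
  have "x = Pinv (P x)" using PinvP[OF xs(1) ne] by simp
  then show "x = Pinv (complex_of_real (cmod (P x)) * cis (Arg (P x)))"
    using rcis_cmod_Arg[of "P x"] by (simp add: rcis_def)
qed

theorem lemma5:
  fixes g :: "real^3 \<Rightarrow> real^3" and G :: "real \<Rightarrow> real" and L :: real
  assumes "\<exists>h. homeomorphism S1 S1 g h"
    and "orientation_preserving g"
    and "bilip_sigma L g S1"
    and "\<exists>H. homeomorphism UNIV UNIV G H"
    and "\<forall>\<theta>. gt g (cis \<theta>) = cis (G \<theta>)"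
  shows "bilip_sigma L (psi G) Z2"
proof -
  obtain h where hom: "homeomorphism S1 S1 g h" using assms(1) by blast
  have gS1: "g ` S1 = S1" using hom by (simp add: homeomorphism_def)
  define e where "e a = Pinv (cis a)" for a
  have einner: "e a \<bullet> e b = cos (a - b)" for a b
    using inner_Pinv[of 1 1 a b] by (simp add: e_def)
  have eS1: "e a \<in> S1" for a
  proof -
    have "norm (e a) = 1" using einner[of a a] by (simp add: norm_eq_sqrt_inner)
    moreover have "(e a)$3 = 0" by (simp add: e_def Pinv_def)
    ultimately show ?thesis by (simp add: S1_def S2_def)
  qed
  have ge: "g (e a) = e (G a)" for a
  proof -
    have "g (e a) \<in> S1" using gS1 eS1 by blast
    then have "Pinv (P (g (e a))) = g (e a)" by (intro PinvP) (auto simp: S1_def)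
    moreover have "P (g (e a)) = cis (G a)" using assms(5) by (simp add: gt_def e_def)
    ultimately show ?thesis by (simp add: e_def)
  qed
  have bil: "arccos (cos (G a - G b)) \<le> L * arccos (cos (a - b))"
            "arccos (cos (a - b)) \<le> L * arccos (cos (G a - G b))" for a b
  proof -
    have "sigma (e a) (e b) \<le> L * sigma (g (e a)) (g (e b)) \<and> sigma (g (e a)) (g (e b)) \<le> L * sigma (e a) (e b)"
      using assms(3) eS1[of a] eS1[of b] unfolding bilip_sigma_def by blast
    then show "arccos (cos (G a - G b)) \<le> L * arccos (cos (a - b))"
            "arccos (cos (a - b)) \<le> L * arccos (cos (G a - G b))"
      unfolding sigma_def ge einner by auto
  qed
  have L1: "1 \<le> L"
  proof -
    define u where "u = arccos (cos (G 0 - G (pi/2)))"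
    have u0: "0 \<le> u" unfolding u_def by (intro arccos_lbound) auto
    have h1: "pi/2 \<le> L * u" using bil(2)[of 0 "pi/2"] by (simp add: u_def)
    have h2: "u \<le> L * (pi/2)" using bil(1)[of 0 "pi/2"] by (simp add: u_def)
    have Lp: "L > 0"
    proof (rule ccontr)
      assume "\<not> L > 0"
      then have "L * u \<le> 0" using u0 by (simp add: mult_nonpos_nonneg)
      then show False using h1 pi_gt_zero by linarith
    qed
    have "pi/2 \<le> L * (L * (pi/2))" using h1 mult_left_mono[OF h2, of L] Lp by linarith
    then have "1 \<le> L * L" using pi_gt_zero by (simp add: algebra_simps)
    show ?thesis
    proof (rule ccontr)
      assume "\<not> 1 \<le> L"
      then have "L * L < 1 * 1" using Lp by (intro mult_strict_mono) auto
      then show False using \<open>1 \<le> L * L\<close> by simp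
    qed
  qed
  show ?thesis unfolding bilip_sigma_def
  proof (intro ballI conjI)
    fix x y assume x: "x \<in> Z2" and y: "y \<in> Z2"
    define r1 a1 r2 a2 where "r1 = cmod (P x)" "a1 = Arg (P x)" "r2 = cmod (P y)" "a2 = Arg (P y)"
    have r: "0 \<le> r1" "r1 < 1" "0 \<le> r2" "r2 < 1"
      using Z2_facts(1)[OF x] Z2_facts(1)[OF y] by (auto simp: r1_a1_r2_a2_def)
    have xe: "x = Pinv (complex_of_real r1 * cis a1)" and ye: "y = Pinv (complex_of_real r2 * cis a2)"
      using Z2_facts(2)[OF x] Z2_facts(2)[OF y] by (auto simp: r1_a1_r2_a2_def)
    have px: "psi G x = Pinv (complex_of_real r1 * cis (G a1))"
     and py: "psi G y = Pinv (complex_of_real r2 * cis (G a2))"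
      by (auto simp: psi_def psit_def r1_a1_r2_a2_def)
    define D where "D = (1 + r1\<^sup>2) * (1 + r2\<^sup>2)"
    define c where "c = (1 - r1\<^sup>2) * (1 - r2\<^sup>2) / D"
    define B where "B = 4 * r1 * r2 / D"
    have Dp: "D > 0" unfolding D_def by (intro mult_pos_pos add_pos_nonneg) auto
    have inner_eq: "Pinv (complex_of_real r1 * cis b1) \<bullet> Pinv (complex_of_real r2 * cis b2)
        = c + B * cos (b1 - b2)" for b1 b2
      using inner_Pinv[OF r(1) r(3), of b1 b2] unfolding c_def B_def D_def
      by (simp add: add_divide_distrib)
    define t where "t = arccos (cos (a1 - a2))"
    define t' where "t' = arccos (cos (G a1 - G a2))"
    have ct: "cos t = cos (a1 - a2)" "cos t' = cos (G a1 - G a2)"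
      unfolding t_def t'_def by (auto intro: cos_arccos)
    have sxy: "sigma x y = arccos (c + B * cos t)"
      unfolding sigma_def xe ye inner_eq ct ..
    have spsi: "sigma (psi G x) (psi G y) = arccos (c + B * cos t')"
      unfolding sigma_def px py inner_eq ct ..
    have tt: "0 \<le> t" "t \<le> pi" "0 \<le> t'" "t' \<le> pi"
      unfolding t_def t'_def by (auto intro: arccos_lbound arccos_ubound)
    have tb: "t' \<le> L * t" "t \<le> L * t'" using bil[of a1 a2] unfolding t_def t'_def by auto
    have c0: "c \<ge> 0" unfolding c_def using r Dp
      by (intro divide_nonneg_pos mult_nonneg_nonneg) (auto simp: power_le_one abs_square_le_1)
    have B0: "B \<ge> 0" unfolding B_def using r Dp by auto
    have cB: "c + B \<le> 1"
    proof -
      have "(1 - r1\<^sup>2) * (1 - r2\<^sup>2) + 4 * r1 * r2 \<le> D"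
      proof -
        have "D - ((1 - r1\<^sup>2) * (1 - r2\<^sup>2) + 4 * r1 * r2) = 2 * (r1 - r2)\<^sup>2"
          unfolding D_def by (simp add: algebra_simps power2_eq_square)
        then show ?thesis using zero_le_power2[of "r1 - r2"] by linarith
      qed
      then show ?thesis unfolding c_def B_def using Dp
        by (simp add: add_divide_distrib[symmetric] divide_le_eq)
    qed
    have "sigma x y \<le> L * sigma (psi G x) (psi G y) \<and> sigma (psi G x) (psi G y) \<le> L * sigma x y"
    proof (cases "B = 0")
      case True
      have "0 \<le> arccos c" using c0 cB True by (intro arccos_lbound) auto
      then show ?thesis unfolding sxy spsi True using L1
        by (simp add: mult_le_cancel_right1)
    next
      case False
      then interpret sph c B using c0 B0 cB by unfold_locales auto
      show ?thesis
        using main1D[OF L1 tt tb(1)] main1D[OF L1 tt(3,4,1,2) tb(2)]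
        unfolding sxy spsi F_def by auto
    qed
    then show "sigma x y \<le> L * sigma (psi G x) (psi G y)"
              "sigma (psi G x) (psi G y) \<le> L * sigma x y" by auto
  qed
qed

end
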